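(* In the setting below, for every $k$ with $\operatorname{Im}\lambda(k)\ge 0$ one has $\psi(x,k)=\begin{pmatrix}0&1\\1&0\end{pmatrix}\phi(-x,k)$. Moreover, if $k_0$ satisfies $\operatorname{Im}\lambda(k_0)>0$ and $\phi(x,k_0)=b_0\,\psi(x,k_0)$ for all $x$ with a constant $b_0$, then $b_0^2=1$, i.e. $b_0=\pm1$.
   Context: Setting: $q:\mathbb{R}\to\mathbb{C}$ with $q(x)\to q_\pm=q_0e^{i\theta_\pm}$ as $x\to\pm\infty$, $q_0>0$, $\theta_++\theta_-\equiv\pi\pmod{2\pi}$, $q-q_\pm$ integrable at $\pm\infty$. Scattering problem (nonlocal Sine-Gordon, $\sigma=-1$): $v_x=\begin{pmatrix}-ik&q(x)\\ -q(-x)&ik\end{pmatrix}v$, $\lambda=\sqrt{k^2-q_0^2}$. Jost solutions: $\phi(x,k)\sim(\lambda+k,-iq_+)^Te^{-i\lambda x}$ as $x\to-\infty$, $\psi(x,k)\sim(-iq_+,\lambda+k)^Te^{i\lambda x}$ as $x\to+\infty$. *)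

theory Defs
  imports "HOL-Analysis.Analysis"
begin

text \<open>Right-hand side of the nonlocal (sigma = -1) scattering problem
  v_x = [[-ik, q(x)], [-q(-x), ik]] v, with v = (v1, v2).\<close>
definition zs_rhs :: "(real \<Rightarrow> complex) \<Rightarrow> complex \<Rightarrow> real \<Rightarrow> complex \<times> complex \<Rightarrow> complex \<times> complex" where
  "zs_rhs q k x v = (- \<i> * k * fst v + q x * snd v, - q (- x) * fst v + \<i> * k * snd v)"

definition solves_zs :: "(real \<Rightarrow> complex) \<Rightarrow> complex \<Rightarrow> (real \<Rightarrow> complex \<times> complex) \<Rightarrow> bool" where
  "solves_zs q k v \<longleftrightarrow> (\<forall>x. (v has_vector_derivative zs_rhs q k x (v x)) (at x))"

definition jost_phi :: "(real \<Rightarrow> complex) \<Rightarrow> complex \<Rightarrow> complex \<Rightarrow> complex \<Rightarrow> (real \<Rightarrow> complex \<times> complex) \<Rightarrow> bool" where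
  "jost_phi q qp k lam v \<longleftrightarrow> solves_zs q k v \<and>
     ((\<lambda>x. (exp (\<i> * lam * of_real x) * fst (v x), exp (\<i> * lam * of_real x) * snd (v x)))
        \<longlongrightarrow> (lam + k, - \<i> * qp)) at_bot"

definition jost_psi :: "(real \<Rightarrow> complex) \<Rightarrow> complex \<Rightarrow> complex \<Rightarrow> complex \<Rightarrow> (real \<Rightarrow> complex \<times> complex) \<Rightarrow> bool" where
  "jost_psi q qp k lam v \<longleftrightarrow> solves_zs q k v \<and>
     ((\<lambda>x. (exp (- \<i> * lam * of_real x) * fst (v x), exp (- \<i> * lam * of_real x) * snd (v x)))
        \<longlongrightarrow> (- \<i> * qp, lam + k)) at_top"

end

theory Submission
  imports Defs
begin


lemma vd_fst: "(v has_vector_derivative D) F \<Longrightarrow> ((\<lambda>x. fst (v x)) has_vector_derivative fst D) F"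
  unfolding has_vector_derivative_def by (drule has_derivative_fst) simp

lemma vd_snd: "(v has_vector_derivative D) F \<Longrightarrow> ((\<lambda>x. snd (v x)) has_vector_derivative snd D) F"
  unfolding has_vector_derivative_def by (drule has_derivative_snd) simp

lemma sol_d1:
  assumes "solves_zs q k v"
  shows "((\<lambda>x. fst (v x)) has_vector_derivative (- \<i> * k * fst (v x) + q x * snd (v x))) (at x)"
  using vd_fst[OF assms[unfolded solves_zs_def, rule_format, of x]] by (simp add: zs_rhs_def)

lemma sol_d2:
  assumes "solves_zs q k v"
  shows "((\<lambda>x. snd (v x)) has_vector_derivative (- q (- x) * fst (v x) + \<i> * k * snd (v x))) (at x)"
  using vd_snd[OF assms[unfolded solves_zs_def, rule_format, of x]] by (simp add: zs_rhs_def)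

lemma wronskian_const:
  assumes v: "solves_zs q k v" and z: "solves_zs q k z"
  obtains c where "\<And>x. fst (v x) * snd (z x) - snd (v x) * fst (z x) = c"
proof -
  have "((\<lambda>x. fst (v x) * snd (z x) - snd (v x) * fst (z x)) has_vector_derivative 0) (at x within UNIV)" for x
  proof -
    have "((\<lambda>x. fst (v x) * snd (z x) - snd (v x) * fst (z x)) has_vector_derivative
      (fst (v x) * (- q (- x) * fst (z x) + \<i> * k * snd (z x)) + (- \<i> * k * fst (v x) + q x * snd (v x)) * snd (z x)
      - (snd (v x) * (- \<i> * k * fst (z x) + q x * snd (z x)) + (- q (- x) * fst (v x) + \<i> * k * snd (v x)) * fst (z x)))) (at x)"
      by (intro has_vector_derivative_diff has_vector_derivative_mult sol_d1 sol_d2 v z)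
    moreover have "(fst (v x) * (- q (- x) * fst (z x) + \<i> * k * snd (z x)) + (- \<i> * k * fst (v x) + q x * snd (v x)) * snd (z x)
      - (snd (v x) * (- \<i> * k * fst (z x) + q x * snd (z x)) + (- q (- x) * fst (v x) + \<i> * k * snd (v x)) * fst (z x))) = 0"
      by (simp add: algebra_simps)
    ultimately show ?thesis by simp
  qed
  then obtain c where "\<And>x. x \<in> UNIV \<Longrightarrow> fst (v x) * snd (z x) - snd (v x) * fst (z x) = c"
    by (rule has_vector_derivative_zero_constant[OF convex_UNIV]) blast
  then show ?thesis using that by blast
qed

lemma reflect_solves:
  assumes v: "solves_zs q k v"
  shows "solves_zs q k (\<lambda>x. (snd (v (- x)), fst (v (- x))))"
  unfolding solves_zs_def
proof
  fix x :: real
  have m: "(uminus has_vector_derivative (-1::real)) (at x)"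
    unfolding has_vector_derivative_def by (auto intro!: derivative_eq_intros)
  have a: "((\<lambda>x. snd (v (- x))) has_vector_derivative (-1::real) *\<^sub>R (- q (- (- x)) * fst (v (- x)) + \<i> * k * snd (v (- x)))) (at x)"
    using vector_diff_chain_at[OF m sol_d2[OF v, of "-x"]] by (simp add: o_def)
  have b: "((\<lambda>x. fst (v (- x))) has_vector_derivative (-1::real) *\<^sub>R (- \<i> * k * fst (v (- x)) + q (- x) * snd (v (- x)))) (at x)"
    using vector_diff_chain_at[OF m sol_d1[OF v, of "-x"]] by (simp add: o_def)
  show "((\<lambda>x. (snd (v (- x)), fst (v (- x)))) has_vector_derivative zs_rhs q k x (snd (v (- x)), fst (v (- x)))) (at x)"
    using has_vector_derivative_Pair[OF a b] by (simp add: zs_rhs_def algebra_simps)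
qed

lemma diff_solves:
  assumes v: "solves_zs q k v" and z: "solves_zs q k z"
  shows "solves_zs q k (\<lambda>x. v x - z x)"
  unfolding solves_zs_def
proof
  fix x
  show "((\<lambda>x. v x - z x) has_vector_derivative zs_rhs q k x (v x - z x)) (at x)"
    using has_vector_derivative_diff[OF v[unfolded solves_zs_def, rule_format, of x] z[unfolded solves_zs_def, rule_format, of x]]
    by (simp add: zs_rhs_def algebra_simps)
qed



lemma rhs_bound:
  "norm (zs_rhs q k t v) \<le> (2 * norm k + norm (q t) + norm (q (- t))) * norm v"
proof -
  have f: "norm (fst v) \<le> norm v" and s: "norm (snd v) \<le> norm v"
    using norm_fst_le[of "fst v" "snd v"] norm_snd_le[of "snd v" "fst v"] by auto
  have "norm (zs_rhs q k t v) \<le> norm (- \<i> * k * fst v + q t * snd v) + norm (- q (- t) * fst v + \<i> * k * snd v)"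
    unfolding zs_rhs_def by (rule norm_Pair_le)
  also have "\<dots> \<le> (norm k * norm (fst v) + norm (q t) * norm (snd v)) + (norm (q (-t)) * norm (fst v) + norm k * norm (snd v))"
    by (intro add_mono norm_triangle_le) (auto simp: norm_mult)
  also have "\<dots> \<le> (norm k * norm v + norm (q t) * norm v) + (norm (q (-t)) * norm v + norm k * norm v)"
    by (intro add_mono mult_left_mono f s) auto
  finally show ?thesis by (simp add: algebra_simps)
qed

lemma back_unique:
  assumes sol: "solves_zs q k d"
    and qint: "\<And>a b. (\<lambda>t. norm (q t)) integrable_on {a..b}"
    and zero: "\<And>x. x \<ge> R \<Longrightarrow> d x = 0"
  shows "d x0 = 0"
proof (rule ccontr)
  assume nz: "d x0 \<noteq> 0"
  define g where "g t = 2 * norm k + norm (q t) + norm (q (- t))" for t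
  have gint: "g integrable_on {a..b}" for a b
  proof -
    have "(\<lambda>t. norm (q (- t))) integrable_on {a..b}"
      using Henstock_Kurzweil_Integration.integrable_reflect_real[of "\<lambda>t. norm (q t)" "-a" "-b"] qint[of "-b" "-a"] by simp
    then show ?thesis unfolding g_def
      by (intro integrable_add qint integrable_const_ivl)
  qed
  have gnn: "g t \<ge> 0" for t unfolding g_def by simp
  have cont: "continuous_on S d" for S
    using sol unfolding solves_zs_def
    by (intro continuous_at_imp_continuous_on ballI) (use has_vector_derivative_continuous in blast)
  define S where "S = {s. \<forall>y\<ge>s. d y = 0}"
  have RS: "R \<in> S" using zero S_def by auto
  have lb: "x0 < s" if "s \<in> S" for s
  proof (rule ccontr)
    assume "\<not> x0 < s"
    then show False using that nz unfolding S_def by auto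
  qed
  have bdd: "bdd_below S" unfolding bdd_below_def using lb less_imp_le by blast
  define s0 where "s0 = Inf S"
  have right: "d y = 0" if yy: "y > s0" for y
  proof -
    obtain s where "s \<in> S" "s < y" using cInf_less_iff[of S y] RS bdd yy s0_def by auto
    then show ?thesis unfolding S_def by auto
  qed
  have ds0: "d s0 = 0"
  proof -
    have "(d \<longlongrightarrow> d s0) (at_right s0)"
      using cont[of UNIV] by (simp add: continuous_on_def filterlim_at_split)
    moreover have "eventually (\<lambda>y. d y = 0) (at_right s0)"
      unfolding eventually_at_right_field using right by (intro exI[of _ "s0+1"]) auto
    then have "(d \<longlongrightarrow> 0) (at_right s0)" by (rule tendsto_eventually)
    ultimately show ?thesis using tendsto_unique[of "at_right s0" d "d s0" 0] by simp
  qed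
  have s0S: "\<forall>y\<ge>s0. d y = 0" using right ds0 by (metis order.not_eq_order_implies_strict)
  have x0s0: "x0 < s0"
  proof -
    have "x0 \<le> s0" unfolding s0_def using RS lb by (intro cInf_greatest) (auto intro: less_imp_le)
    moreover have "x0 \<noteq> s0" using nz ds0 by auto
    ultimately show ?thesis by simp
  qed
  have "continuous_on {x0..s0} (\<lambda>u. integral {u..s0} g)"
    by (rule indefinite_integral_continuous_1'[OF gint])
  then have "isCont (\<lambda>u. integral {u..s0} g) s0 \<or> True" by simp
  obtain \<delta> where \<delta>: "\<delta> > 0" "\<And>u. u \<in> {x0..s0} \<Longrightarrow> dist u s0 < \<delta> \<Longrightarrow> dist (integral {u..s0} g) (integral {s0..s0} g) < 1/2"
    using \<open>continuous_on {x0..s0} (\<lambda>u. integral {u..s0} g)\<close> x0s0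
    unfolding continuous_on_iff
    by (metis (no_types, lifting) atLeastAtMost_iff less_imp_le order_refl half_gt_zero_iff zero_less_one)
  define u0 where "u0 = max x0 (s0 - \<delta>/2)"
  have u0: "u0 \<in> {x0..s0}" "u0 < s0" using \<delta>(1) x0s0 unfolding u0_def by auto
  have hu0: "integral {u0..s0} g \<le> 1/2"
  proof -
    have "dist u0 s0 < \<delta>" using u0 \<delta>(1) unfolding u0_def dist_real_def by auto
    then have "dist (integral {u0..s0} g) (integral {s0..s0} g) < 1/2" using \<delta>(2)[OF u0(1)] by blast
    then show ?thesis by (simp add: dist_real_def)
  qed
  obtain y0 where y0: "y0 \<in> {u0..s0}" "\<And>y. y \<in> {u0..s0} \<Longrightarrow> norm (d y) \<le> norm (d y0)"
    using continuous_attains_sup[of "{u0..s0}" "\<lambda>y. norm (d y)"] u0 continuous_on_norm[OF cont]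
    by auto
  define m where "m = norm (d y0)"
  have bnd: "norm (d x) \<le> m * (1/2)" if x: "x \<in> {u0..s0}" for x
  proof -
    have ftc: "((\<lambda>t. zs_rhs q k t (d t)) has_integral (d s0 - d x)) {x..s0}"
      using x sol unfolding solves_zs_def
      by (intro fundamental_theorem_of_calculus) (auto intro: has_vector_derivative_at_within)
    have "norm (d x) = norm (integral {x..s0} (\<lambda>t. zs_rhs q k t (d t)))"
      using ftc ds0 by (simp add: integral_unique)
    also have "\<dots> \<le> integral {x..s0} (\<lambda>t. m * g t)"
    proof (rule integral_norm_bound_integral)
      show "(\<lambda>t. zs_rhs q k t (d t)) integrable_on {x..s0}" using ftc by blast
      show "(\<lambda>t. m * g t) integrable_on {x..s0}" using integrable_on_cmult_left[OF gint, of m x s0] by simp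
      fix t assume t: "t \<in> {x..s0}"
      have "norm (zs_rhs q k t (d t)) \<le> g t * norm (d t)" unfolding g_def by (rule rhs_bound)
      also have "\<dots> \<le> g t * m" using y0(2)[of t] t x gnn[of t] unfolding m_def
        by (intro mult_left_mono) auto
      finally show "norm (zs_rhs q k t (d t)) \<le> m * g t" by (simp add: mult.commute)
    qed
    also have "\<dots> = m * integral {x..s0} g" by simp
    also have "\<dots> \<le> m * integral {u0..s0} g"
      using x gint gnn unfolding m_def
      by (intro mult_left_mono integral_subset_le) auto
    also have "\<dots> \<le> m * (1/2)" using hu0 unfolding m_def by (intro mult_left_mono) auto
    finally show ?thesis .
  qed
  have "m = 0" using bnd[OF y0(1)] unfolding m_def by simp
  then have "\<forall>y\<ge>u0. d y = 0" using y0(2) s0S unfolding m_def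
    by (metis atLeastAtMost_iff linorder_le_cases norm_le_zero_iff)
  then have "u0 \<in> S" unfolding S_def by auto
  then have "s0 \<le> u0" unfolding s0_def using bdd by (rule cInf_lower)
  then show False using u0 by simp
qed



lemma part1:
  fixes q :: "real \<Rightarrow> complex"
  assumes qint: "\<And>a b. (\<lambda>t. norm (q t)) integrable_on {a..b}"
    and qp: "qp \<noteq> 0"
    and im: "Im lam \<ge> 0"
    and jphi: "jost_phi q qp k lam phi" and jpsi: "jost_psi q qp k lam psi"
  shows "psi x = (snd (phi (- x)), fst (phi (- x)))"
proof -
  define w where "w x = (snd (phi (- x)), fst (phi (- x)))" for x
  define E where "E x = exp (- \<i> * lam * of_real x)" for x
  have solphi: "solves_zs q k phi" using jphi unfolding jost_phi_def by simp
  have solpsi: "solves_zs q k psi" using jpsi unfolding jost_psi_def by simp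
  have solw: "solves_zs q k w" unfolding w_def by (rule reflect_solves[OF solphi])
  have psil: "((\<lambda>x. (E x * fst (psi x), E x * snd (psi x))) \<longlongrightarrow> (- \<i> * qp, lam + k)) at_top"
    using jpsi unfolding jost_psi_def E_def by simp
  have psi1: "((\<lambda>x. E x * fst (psi x)) \<longlongrightarrow> - \<i> * qp) at_top"
    using tendsto_fst[OF psil] by simp
  have psi2: "((\<lambda>x. E x * snd (psi x)) \<longlongrightarrow> lam + k) at_top"
    using tendsto_snd[OF psil] by simp
  have phil: "((\<lambda>x. (exp (\<i> * lam * of_real x) * fst (phi x), exp (\<i> * lam * of_real x) * snd (phi x))) \<longlongrightarrow> (lam + k, - \<i> * qp)) at_bot"
    using jphi unfolding jost_phi_def by simp
  have phil': "((\<lambda>x. (exp (\<i> * lam * of_real (- x)) * fst (phi (- x)), exp (\<i> * lam * of_real (- x)) * snd (phi (- x)))) \<longlongrightarrow> (lam + k, - \<i> * qp)) at_top"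
    using filterlim_compose[OF phil filterlim_uminus_at_bot_at_top] by (simp add: o_def)
  have ee: "exp (\<i> * lam * of_real (- x)) = E x" for x unfolding E_def by simp
  have w1: "((\<lambda>x. E x * fst (w x)) \<longlongrightarrow> - \<i> * qp) at_top"
    using tendsto_snd[OF phil'] unfolding w_def ee by simp
  have w2: "((\<lambda>x. E x * snd (w x)) \<longlongrightarrow> lam + k) at_top"
    using tendsto_fst[OF phil'] unfolding w_def ee by simp
  obtain c where c: "\<And>x. fst (psi x) * snd (w x) - snd (psi x) * fst (w x) = c"
    using wronskian_const[OF solpsi solw] by blast
  have "((\<lambda>x. (E x * fst (psi x)) * (E x * snd (w x)) - (E x * snd (psi x)) * (E x * fst (w x))) \<longlongrightarrow>
      (- \<i> * qp) * (lam + k) - (lam + k) * (- \<i> * qp)) at_top"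
    by (rule tendsto_diff[OF tendsto_mult[OF psi1 w2] tendsto_mult[OF psi2 w1]])
  moreover have "(E x * fst (psi x)) * (E x * snd (w x)) - (E x * snd (psi x)) * (E x * fst (w x)) = E x * E x * c" for x
    using c[of x] by (simp add: algebra_simps)
  ultimately have lc: "((\<lambda>x. E x * E x * c) \<longlongrightarrow> 0) at_top"
    by simp
  have c0: "c = 0"
  proof -
    have "eventually (\<lambda>x. norm c \<le> norm (E x * E x * c)) at_top"
    proof (rule eventually_at_top_linorderI[of 0])
      fix x :: real assume "x \<ge> 0"
      then have "norm (E x) \<ge> 1" unfolding E_def using im by (simp add: norm_exp_eq_Re)
      then have "norm (E x * E x) \<ge> 1" using mult_mono[of 1 "norm (E x)" 1 "norm (E x)"] by (simp add: norm_mult)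
      then show "norm c \<le> norm (E x * E x * c)"
        using mult_right_mono[OF \<open>norm (E x * E x) \<ge> 1\<close> norm_ge_zero[of c]] by (simp add: norm_mult)
    qed
    then have "norm c \<le> 0"
      using tendsto_lowerbound[OF tendsto_norm[OF lc], of "norm c"] by simp
    then show ?thesis by simp
  qed
  define d where "d x = psi x - w x" for x
  have sold: "solves_zs q k d" unfolding d_def by (rule diff_solves[OF solpsi solw])
  have det0: "fst (psi x) * snd (d x) = snd (psi x) * fst (d x)" for x
    using c[of x] c0 unfolding d_def by (simp add: algebra_simps)
  have d1: "((\<lambda>x. E x * fst (d x)) \<longlongrightarrow> 0) at_top"
    using tendsto_diff[OF psi1 w1] unfolding d_def by (simp add: algebra_simps)
  have "eventually (\<lambda>x. E x * fst (psi x) \<noteq> 0) at_top"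
    using tendsto_imp_eventually_ne[OF psi1, of 0] qp by fastforce
  then obtain R where R: "\<And>x. x \<ge> R \<Longrightarrow> E x * fst (psi x) \<noteq> 0"
    by (auto simp: eventually_at_top_linorder)
  have Rpsi: "fst (psi x) \<noteq> 0" if "x \<ge> R" for x using R[OF that] by auto
  have "((\<lambda>x. fst (d x) / fst (psi x)) has_vector_derivative 0) (at x within {R..})" if x: "x \<in> {R..}" for x
  proof -
    have nz: "fst (psi x) \<noteq> 0" using Rpsi x by auto
    have inv: "((\<lambda>x. inverse (fst (psi x))) has_vector_derivative
        ((- \<i> * k * fst (psi x) + q x * snd (psi x)) * - (inverse (fst (psi x)) ^ Suc (Suc 0)))) (at x)"
      using field_vector_diff_chain_at[OF sol_d1[OF solpsi, of x] DERIV_inverse[OF nz]] by (simp add: o_def)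
    have "((\<lambda>x. fst (d x) * inverse (fst (psi x))) has_vector_derivative
        (fst (d x) * ((- \<i> * k * fst (psi x) + q x * snd (psi x)) * - (inverse (fst (psi x)) ^ Suc (Suc 0)))
         + (- \<i> * k * fst (d x) + q x * snd (d x)) * inverse (fst (psi x)))) (at x)"
      by (rule has_vector_derivative_mult[OF sol_d1[OF sold] inv])
    moreover have "fst (d x) * ((- \<i> * k * fst (psi x) + q x * snd (psi x)) * - (inverse (fst (psi x)) ^ Suc (Suc 0)))
         + (- \<i> * k * fst (d x) + q x * snd (d x)) * inverse (fst (psi x)) = 0"
    proof -
      have "fst (d x) * ((- \<i> * k * fst (psi x) + q x * snd (psi x)) * - (inverse (fst (psi x)) ^ Suc (Suc 0)))
         + (- \<i> * k * fst (d x) + q x * snd (d x)) * inverse (fst (psi x))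
         = q x * (fst (psi x) * snd (d x) - snd (psi x) * fst (d x)) / (fst (psi x))^2"
        using nz by (simp add: field_simps power2_eq_square)
      then show ?thesis using det0[of x] by simp
    qed
    ultimately have "((\<lambda>x. fst (d x) * inverse (fst (psi x))) has_vector_derivative 0) (at x)" by metis
    then show ?thesis unfolding divide_inverse by (rule has_vector_derivative_at_within)
  qed
  then obtain cc where cc: "\<And>x. x \<in> {R..} \<Longrightarrow> fst (d x) / fst (psi x) = cc"
    using has_vector_derivative_zero_constant[OF convex_real_interval(1), of R "\<lambda>x. fst (d x) / fst (psi x)"] by metis
  have eqd: "E x * fst (d x) = cc * (E x * fst (psi x))" if "x \<ge> R" for x
    using cc[of x] Rpsi[of x] that by (auto simp: field_simps)
  have "((\<lambda>x. E x * fst (d x)) \<longlongrightarrow> cc * (- \<i> * qp)) at_top"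
  proof (rule Lim_transform_eventually)
    show "((\<lambda>x. cc * (E x * fst (psi x))) \<longlongrightarrow> cc * (- \<i> * qp)) at_top"
      by (rule tendsto_mult[OF tendsto_const psi1])
    show "eventually (\<lambda>x. cc * (E x * fst (psi x)) = E x * fst (d x)) at_top"
      using eqd by (intro eventually_at_top_linorderI[of R]) (metis (no_types))
  qed
  then have "cc * (- \<i> * qp) = 0" using tendsto_unique[OF _ _ d1] by (metis trivial_limit_at_top_linorder)
  then have cc0: "cc = 0" using qp by simp
  have dz: "d x = 0" if "x \<ge> R" for x
  proof -
    have a: "fst (d x) = 0" using eqd[OF that] cc0 by (simp add: E_def)
    then have "snd (d x) = 0" using det0[of x] Rpsi[OF that] by simp
    with a show ?thesis by (simp add: prod_eq_iff)
  qed
  have "d x = 0" by (rule back_unique[OF sold qint dz])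
  then show ?thesis unfolding d_def w_def by simp
qed



lemma psi_nonzero:
  assumes jpsi: "jost_psi q qp k lam psi" and qp: "qp \<noteq> 0"
  shows "\<exists>x. fst (psi x) \<noteq> 0"
proof (rule ccontr)
  assume "\<not> (\<exists>x. fst (psi x) \<noteq> 0)"
  then have z: "\<And>x. fst (psi x) = 0" by simp
  have "((\<lambda>x. (exp (- \<i> * lam * of_real x) * fst (psi x), exp (- \<i> * lam * of_real x) * snd (psi x))) \<longlongrightarrow> (- \<i> * qp, lam + k)) at_top"
    using jpsi unfolding jost_psi_def by simp
  from tendsto_fst[OF this] have "((\<lambda>x. exp (- \<i> * lam * of_real x) * fst (psi x)) \<longlongrightarrow> - \<i> * qp) at_top" by simp
  then have "((\<lambda>x::real. 0::complex) \<longlongrightarrow> - \<i> * qp) at_top" unfolding z by simp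
  then have "- \<i> * qp = 0" using tendsto_unique[OF _ _ tendsto_const] by (metis trivial_limit_at_top_linorder)
  then show False using qp by simp
qed

lemma qint_lemma:
  fixes q :: "real \<Rightarrow> complex"
  assumes int_p: "(\<lambda>x. q x - qp) absolutely_integrable_on {0..}"
    and int_m: "(\<lambda>x. q x - qm) absolutely_integrable_on {..0}"
  shows "(\<lambda>t. norm (q t)) integrable_on {a..b}"
proof -
  have p: "q absolutely_integrable_on {0..b}"
  proof -
    have "(\<lambda>x. q x - qp) absolutely_integrable_on {0..b}"
      by (rule set_integrable_subset[OF int_p]) auto
    moreover have "(\<lambda>x. qp) absolutely_integrable_on {0..b}" by simp
    ultimately have "(\<lambda>x. (q x - qp) + qp) absolutely_integrable_on {0..b}"
      by (rule set_integral_add(1))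
    then show ?thesis by simp
  qed
  have m: "q absolutely_integrable_on {a..0}"
  proof -
    have "(\<lambda>x. q x - qm) absolutely_integrable_on {a..0}"
      by (rule set_integrable_subset[OF int_m]) auto
    moreover have "(\<lambda>x. qm) absolutely_integrable_on {a..0}" by simp
    ultimately have "(\<lambda>x. (q x - qm) + qm) absolutely_integrable_on {a..0}"
      by (rule set_integral_add(1))
    then show ?thesis by simp
  qed
  have "q absolutely_integrable_on ({a..0} \<union> {0..b})"
    by (rule absolutely_integrable_Un[OF m p])
  then have "q absolutely_integrable_on {a..b}"
    by (rule set_integrable_subset) auto
  then show ?thesis unfolding absolutely_integrable_on_def by simp
qed

theorem mainTheorem8:
  fixes q :: "real \<Rightarrow> complex" and q0 :: real and thp thmi :: real
  defines "qp \<equiv> of_real q0 * exp (\<i> * of_real thp)"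
      and "qm \<equiv> of_real q0 * exp (\<i> * of_real thmi)"
  assumes q0: "q0 > 0"
    and theta: "\<exists>n::int. thp + thmi = pi + 2 * pi * of_int n"
    and lim_p: "(q \<longlongrightarrow> qp) at_top"
    and lim_m: "(q \<longlongrightarrow> qm) at_bot"
    and int_p: "(\<lambda>x. q x - qp) absolutely_integrable_on {0..}"
    and int_m: "(\<lambda>x. q x - qm) absolutely_integrable_on {..0}"
  shows "(\<forall>k lam phi psi. lam\<^sup>2 = k\<^sup>2 - (of_real q0)\<^sup>2 \<and> Im lam \<ge> 0 \<and> lam \<noteq> 0 \<and>
            jost_phi q qp k lam phi \<and> jost_psi q qp k lam psi \<longrightarrow>
            (\<forall>x. psi x = (snd (phi (- x)), fst (phi (- x)))))
       \<and> (\<forall>k0 lam0 phi psi b0. lam0\<^sup>2 = k0\<^sup>2 - (of_real q0)\<^sup>2 \<and> Im lam0 > 0 \<and>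
            jost_phi q qp k0 lam0 phi \<and> jost_psi q qp k0 lam0 psi \<and>
            (\<forall>x. phi x = (b0 * fst (psi x), b0 * snd (psi x))) \<longrightarrow> b0\<^sup>2 = 1)"
proof -
  have qint: "\<And>a b. (\<lambda>t. norm (q t)) integrable_on {a..b}"
    by (rule qint_lemma[OF int_p int_m])
  have qp0: "qp \<noteq> 0" unfolding qp_def using q0 by simp
  have P1: "\<forall>k lam phi psi. lam\<^sup>2 = k\<^sup>2 - (of_real q0)\<^sup>2 \<and> Im lam \<ge> 0 \<and> lam \<noteq> 0 \<and>
            jost_phi q qp k lam phi \<and> jost_psi q qp k lam psi \<longrightarrow>
            (\<forall>x. psi x = (snd (phi (- x)), fst (phi (- x))))"
    using part1[OF qint qp0] by blast
  have P2: "b0\<^sup>2 = 1" if H: "lam0\<^sup>2 = k0\<^sup>2 - (of_real q0)\<^sup>2" "Im lam0 > 0"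
            "jost_phi q qp k0 lam0 phi" "jost_psi q qp k0 lam0 psi"
            "\<forall>x. phi x = (b0 * fst (psi x), b0 * snd (psi x))" for k0 lam0 phi psi b0
  proof -
    have r: "psi x = (snd (phi (- x)), fst (phi (- x)))" for x
      using part1[OF qint qp0 _ H(3) H(4)] H(2) by simp
    obtain x where x: "fst (psi x) \<noteq> 0" using psi_nonzero[OF H(4) qp0] by blast
    have a: "fst (psi x) = b0 * snd (psi (- x))" using r[of x] H(5) by simp
    have b: "snd (psi (- x)) = b0 * fst (psi x)" using r[of "- x"] H(5) by simp
    have "fst (psi x) = b0\<^sup>2 * fst (psi x)" using a b by (simp add: power2_eq_square)
    then show ?thesis using x by simp
  qed
  show ?thesis using P1 P2 by blast
qed


end
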